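(* Let $a<b$ be real numbers with $\frac{a+b}{2}>0$, let $\mathcal D=U(a,b)$, and let $(N,u)\sim H(n,\mathcal D)$ be a random additively separable hedonic game. Then $$\lim_{n\to\infty}\mathbb P\big((N,u)\text{ admits a Nash-stable partition}\big)=1.$$
   Context: Additively separable hedonic game: a finite agent set $N$ and utilities $u_x(y)\in\mathbb R$ for ordered pairs $x\ne y$; for a coalition $C\ni x$, $u_x(C)=\sum_{y\in C\setminus\{x\}}u_x(y)$ (singleton has utility $0$). Random model $H(n,\mathcal D)$: $|N|=n$ and all $u_x(y)$, $x\ne y$, i.i.d. from $\mathcal D$. A partition $\pi$ of $N$ is Nash-stable if no agent $x$ can strictly increase its utility by moving alone to another coalition of $\pi$ or to a new singleton coalition. *)

theory Defs
  imports "HOL-Probability.Probability" "HOL-Library.Disjoint_Sets"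
begin

definition agents :: "nat \<Rightarrow> nat set" where
  "agents n = {..<n}"

definition agent_pairs :: "nat \<Rightarrow> (nat \<times> nat) set" where
  "agent_pairs n = {(x, y). x < n \<and> y < n \<and> x \<noteq> y}"

definition coal_util :: "((nat \<times> nat) \<Rightarrow> real) \<Rightarrow> nat \<Rightarrow> nat set \<Rightarrow> real" where
  "coal_util u x C = (\<Sum>y\<in>C - {x}. u (x, y))"

definition nash_stable :: "nat set \<Rightarrow> ((nat \<times> nat) \<Rightarrow> real) \<Rightarrow> nat set set \<Rightarrow> bool" where
  "nash_stable N u \<pi> \<longleftrightarrow> partition_on N \<pi> \<and>
     (\<forall>x\<in>N. \<forall>C\<in>\<pi>. x \<in> C \<longrightarrow>
        coal_util u x {x} \<le> coal_util u x C \<and>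
        (\<forall>C'\<in>\<pi>. C' \<noteq> C \<longrightarrow> coal_util u x (insert x C') \<le> coal_util u x C))"

text \<open>The random model H(n, U(a,b)): all u(x,y), x \<noteq> y, i.i.d. uniform on (a,b).\<close>
definition H_unif :: "nat \<Rightarrow> real \<Rightarrow> real \<Rightarrow> ((nat \<times> nat) \<Rightarrow> real) measure" where
  "H_unif n a b = PiM (agent_pairs n) (\<lambda>_. uniform_measure lborel {a<..<b})"

definition admits_nash_stable :: "nat \<Rightarrow> ((nat \<times> nat) \<Rightarrow> real) \<Rightarrow> bool" where
  "admits_nash_stable n u \<longleftrightarrow> (\<exists>\<pi>. nash_stable (agents n) u \<pi>)"

end

theory Submission
  imports Defs "HOL-Real_Asymp.Real_Asymp"
begin


lemma U_prob: "a < (b::real) \<Longrightarrow> prob_space (uniform_measure lborel {a<..<b})"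
  by (rule prob_space_uniform_measure) auto

lemma U_eq:
  assumes "a < (b::real)"
  shows "uniform_measure lborel {a<..<b} = density lborel (\<lambda>x. ennreal (indicator {a..b} x / measure lborel {a..b}))"
  unfolding uniform_measure_def
proof (rule density_cong)
  have "AE x in lborel. x \<noteq> a" by (rule AE_lborel_singleton)
  moreover have "AE x in lborel. x \<noteq> b" by (rule AE_lborel_singleton)
  ultimately have "AE x in lborel. x \<noteq> a \<and> x \<noteq> b" by (rule AE_conjI)
  then show "AE x in lborel. indicator {a<..<b} x / emeasure lborel {a<..<b} = ennreal (indicator {a..b} x / measure lborel {a..b})"
    by (rule eventually_mono) (use assms in \<open>auto simp: indicator_def divide_ennreal simp flip: divide_ennreal[of 1 "b - a", simplified]\<close>)
qed auto

lemma U_exp: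
  assumes "a < (b::real)"
  shows "integral\<^sup>L (uniform_measure lborel {a<..<b}) (\<lambda>x. x) = (a + b) / 2"
proof -
  interpret prob_space "uniform_measure lborel {a<..<b}" using U_prob[OF assms] .
  have "distributed (uniform_measure lborel {a<..<b}) lborel (\<lambda>x. x) (\<lambda>x. indicator {a .. b} x / measure lborel {a .. b})"
    unfolding distributed_def
    apply (subst distr_id2) apply simp
    apply (subst U_eq[OF assms]) by auto
  from uniform_distributed_expectation[OF this] show ?thesis .
qed

lemma U_AE: "a < (b::real) \<Longrightarrow> AE x in uniform_measure lborel {a<..<b}. x \<in> {a..b}"
  by (rule AE_uniform_measureI) auto



lemma H_prob: "a < (b::real) \<Longrightarrow> prob_space (H_unif n a b)"
  unfolding H_unif_def by (rule prob_space_PiM) (rule U_prob)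

lemma H_comp_distr: "a < (b::real) \<Longrightarrow> p \<in> agent_pairs n \<Longrightarrow>
   distr (H_unif n a b) (uniform_measure lborel {a<..<b}) (\<lambda>u. u p) = uniform_measure lborel {a<..<b}"
  unfolding H_unif_def by (rule distr_PiM_component) (auto intro: U_prob)

lemma H_exp: assumes "a < (b::real)" "p \<in> agent_pairs n"
  shows "integral\<^sup>L (H_unif n a b) (\<lambda>u. u p) = (a + b) / 2"
proof -
  have m: "(\<lambda>u. u p) \<in> measurable (H_unif n a b) (uniform_measure lborel {a<..<b})"
    unfolding H_unif_def using assms(2) by (rule measurable_component_singleton)
  have "integral\<^sup>L (H_unif n a b) (\<lambda>u. u p) = integral\<^sup>L (distr (H_unif n a b) (uniform_measure lborel {a<..<b}) (\<lambda>u. u p)) (\<lambda>x. x)"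
    by (rule integral_distr[symmetric, OF m]) simp
  also have "\<dots> = (a + b) / 2" using H_comp_distr[OF assms] U_exp[OF assms(1)] by simp
  finally show ?thesis .
qed

lemma H_AE: assumes "a < (b::real)" "p \<in> agent_pairs n"
  shows "AE u in H_unif n a b. u p \<in> {a..b}"
  unfolding H_unif_def
  using AE_PiM_component[of "agent_pairs n" "\<lambda>_. uniform_measure lborel {a<..<b}", OF _ assms(2) U_AE[OF assms(1)]]
    U_prob[OF assms(1)] by blast

lemma H_indep: assumes "a < (b::real)" "agent_pairs n \<noteq> {}"
  shows "prob_space.indep_vars (H_unif n a b) (\<lambda>_. borel) (\<lambda>p u. u p) (agent_pairs n)"
proof -
  let ?U = "uniform_measure lborel {a<..<b}"
  let ?I = "agent_pairs n"
  interpret prob_space "H_unif n a b" using H_prob[OF assms(1)] .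
  have rv: "random_variable ?U (\<lambda>u. u p)" if "p \<in> ?I" for p
    unfolding H_unif_def using that by (rule measurable_component_singleton)
  have "indep_vars (\<lambda>_. ?U) (\<lambda>p u. u p) ?I"
  proof (subst indep_vars_iff_distr_eq_PiM[OF assms(2)])
    show "random_variable ?U (\<lambda>u. u p)" for p
    proof (cases "p \<in> ?I")
      case True then show ?thesis by (rule rv)
    next
      case False
      have "(\<lambda>u. u p) \<in> measurable (H_unif n a b) ?U \<longleftrightarrow> (\<lambda>u. undefined) \<in> measurable (H_unif n a b) ?U"
        by (rule measurable_cong) (use False in \<open>auto simp: H_unif_def space_PiM PiE_def extensional_def, metis prod.collapse\<close>)
      moreover have "undefined \<in> space ?U" by simp
      ultimately show ?thesis by simp
    qed
    have "distr (H_unif n a b) (PiM ?I (\<lambda>_. ?U)) (\<lambda>x. \<lambda>i\<in>?I. x i) = PiM ?I (\<lambda>_. ?U)"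
      unfolding H_unif_def using distr_PiM_reindex[of ?I "\<lambda>_. ?U" id ?I] by (auto intro: U_prob[OF assms(1)])
    also have "\<dots> = PiM ?I (\<lambda>i. distr (H_unif n a b) ?U (\<lambda>x. x i))"
      by (rule PiM_cong) (auto simp: H_comp_distr[OF assms(1)])
    finally show "distr (H_unif n a b) (PiM ?I (\<lambda>_. ?U)) (\<lambda>x. \<lambda>i\<in>?I. x i) = PiM ?I (\<lambda>i. distr (H_unif n a b) ?U (\<lambda>x. x i))" .
  qed
  then show ?thesis
    by (rule indep_vars_compose2[where Y="\<lambda>_ x. x", simplified]) simp
qed



lemma card_Ix: "x < n \<Longrightarrow> card (Pair x ` ({..<n} - {x})) = n - 1"
  by (subst card_image) (auto simp: inj_on_def)

lemma H_row:
  assumes ab: "a < (b::real)" and m: "(a + b) / 2 > 0" and x: "x < n" and n: "2 \<le> n"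
  shows "measure (H_unif n a b) {u \<in> space (H_unif n a b). (\<Sum>p\<in>Pair x ` ({..<n} - {x}). u p) \<le> 0}
     \<le> exp (- 2 * (real n - 1) * ((a + b) / 2)^2 / (b - a)^2)"
proof -
  let ?I = "Pair x ` ({..<n} - {x})"
  let ?m = "(a + b) / 2"
  have sub: "?I \<subseteq> agent_pairs n" using x by (auto simp: agent_pairs_def)
  have ne: "agent_pairs n \<noteq> {}" proof -
    have "(0, 1) \<in> agent_pairs n" using n by (simp add: agent_pairs_def)
    then show ?thesis by blast
  qed
  interpret prob_space "H_unif n a b" using H_prob[OF ab] .
  have cI: "card ?I = n - 1" using card_Ix[OF x] .
  have mu: "(\<Sum>p\<in>?I. expectation (\<lambda>u. u p)) = real (n - 1) * ?m"
  proof -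
    have "(\<Sum>p\<in>?I. expectation (\<lambda>u. u p)) = (\<Sum>p\<in>?I. ?m)"
      by (rule sum.cong) (use H_exp[OF ab] sub in auto)
    then show ?thesis using cI by simp
  qed
  interpret Hoeffding_ineq "H_unif n a b" ?I "\<lambda>p u. u p" "\<lambda>_. a" "\<lambda>_. b" "real (n - 1) * ?m"
  proof unfold_locales
    show "finite ?I" by simp
    show "indep_vars (\<lambda>_. borel) (\<lambda>p u. u p) ?I"
      by (rule indep_vars_subset[OF H_indep[OF ab ne] sub])
    show "AE u in H_unif n a b. u i \<in> {a..b}" if "i \<in> ?I" for i
      using H_AE[OF ab] that sub by blast
  qed (rule eq_reflection, use mu in simp)
  have pos: "(\<Sum>i\<in>?I. (b - a)\<^sup>2) > 0"
    using ab cI n by (simp add: )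
  have "prob {u \<in> space (H_unif n a b). (\<Sum>p\<in>?I. u p) \<le> real (n - 1) * ?m - real (n - 1) * ?m}
     \<le> exp (-2 * (real (n - 1) * ?m)\<^sup>2 / (\<Sum>i\<in>?I. (b - a)\<^sup>2))"
    by (rule Hoeffding_ineq_le) (use m pos in auto)
  also have "-2 * (real (n - 1) * ?m)\<^sup>2 / (\<Sum>i\<in>?I. (b - a)\<^sup>2) = - 2 * (real n - 1) * ?m^2 / (b - a)^2"
  proof -
    have k: "real (n - 1) = real n - 1" "real n - 1 > 0" using n by (auto simp: of_nat_diff)
    have d: "(b - a)^2 > 0" using ab by simp
    have "(\<Sum>i\<in>?I. (b - a)\<^sup>2) = (real n - 1) * (b - a)^2" using cI k by simp
    then show ?thesis unfolding k(1) using k(2) d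
      by (simp add: power_mult_distrib divide_simps) (simp add: power2_eq_square algebra_simps)
  qed
  finally show ?thesis by simp
qed



lemma comp_meas: "a < (b::real) \<Longrightarrow> (\<lambda>u. u p) \<in> borel_measurable (H_unif n a b)"
proof (cases "p \<in> agent_pairs n")
  case True
  assume ab: "a < b"
  have "(\<lambda>u. u p) \<in> measurable (H_unif n a b) (uniform_measure lborel {a<..<b})"
    unfolding H_unif_def using True by (rule measurable_component_singleton)
  then show ?thesis
    by (subst measurable_cong_sets[OF refl, where N'="uniform_measure lborel {a<..<b}"]) auto
next
  case False
  have "(\<lambda>u. u p) \<in> borel_measurable (H_unif n a b) \<longleftrightarrow> (\<lambda>u. undefined :: real) \<in> borel_measurable (H_unif n a b)"
    by (rule measurable_cong) (use False in \<open>auto simp: H_unif_def space_PiM PiE_def extensional_def, metis prod.collapse\<close>)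
  then show ?thesis by simp
qed

lemma coal_meas: "a < (b::real) \<Longrightarrow> (\<lambda>u. coal_util u x C) \<in> borel_measurable (H_unif n a b)"
proof (cases "finite (C - {x})")
  case True
  assume ab: "a < b"
  show ?thesis unfolding coal_util_def by (rule borel_measurable_sum) (rule comp_meas[OF ab])
qed (simp add: coal_util_def)

lemma admits_meas:
  assumes ab: "a < (b::real)"
  shows "{u \<in> space (H_unif n a b). admits_nash_stable n u} \<in> sets (H_unif n a b)"
proof -
  have "{u \<in> space (H_unif n a b). admits_nash_stable n u} =
        {u \<in> space (H_unif n a b). \<exists>\<pi>\<in>Pow (Pow (agents n)). nash_stable (agents n) u \<pi>}"
    unfolding admits_nash_stable_def nash_stable_def partition_on_def by blast
  also have "\<dots> \<in> sets (H_unif n a b)"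
  proof -
    have "Measurable.pred (H_unif n a b) (\<lambda>u. nash_stable (agents n) u \<pi>)" if "\<pi> \<in> Pow (Pow (agents n))" for \<pi>
    proof -
      have [simp]: "finite \<pi>" using that by (intro finite_subset[of \<pi> "Pow (agents n)"]) (auto simp: agents_def)
      have [simp]: "finite (agents n)" by (simp add: agents_def)
      have [measurable]: "\<And>x C. (\<lambda>u. coal_util u x C) \<in> borel_measurable (H_unif n a b)"
        using coal_meas[OF ab] .
      have le: "\<And>f g. f \<in> borel_measurable (H_unif n a b) \<Longrightarrow> g \<in> borel_measurable (H_unif n a b) \<Longrightarrow>
         Measurable.pred (H_unif n a b) (\<lambda>u. f u \<le> (g u::real))" unfolding Measurable.pred_def by (rule borel_measurable_le)
      show ?thesis unfolding nash_stable_def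
        by (intro pred_intros_conj1' pred_intros_finite(3) pred_intros_imp' pred_intros_logic(3) le coal_meas[OF ab]) simp_all
    qed
    then have "Measurable.pred (H_unif n a b) (\<lambda>u. \<exists>\<pi>\<in>Pow (Pow (agents n)). nash_stable (agents n) u \<pi>)"
      by (intro pred_intros_finite) (auto simp: agents_def)
    then show ?thesis by (simp add: Measurable.pred_def)
  qed
  finally show ?thesis .
qed



lemma lim_aux: assumes "c > (0::real)"
  shows "(\<lambda>n. real n * exp (- c * (real n - 1))) \<longlonglongrightarrow> 0"
  using assms by real_asymp

lemma good_ns:
  assumes n: "n \<ge> 1" and g: "\<forall>x<n. 0 \<le> coal_util u x (agents n)"
  shows "admits_nash_stable n u"
  unfolding admits_nash_stable_def
proof (rule exI[of _ "{agents n}"])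
  have "0 \<in> agents n" using n by (simp add: agents_def)
  then have ne: "agents n \<noteq> {}" by blast
  show "nash_stable (agents n) u {agents n}"
    unfolding nash_stable_def
    using ne g by (auto simp: partition_on_def disjoint_def coal_util_def agents_def)
qed

lemma row_eq: "coal_util u x (agents n) = (\<Sum>p\<in>Pair x ` ({..<n} - {x}). u p)"
  unfolding coal_util_def agents_def by (subst sum.reindex) (auto simp: inj_on_def)

theorem proposition3:
  fixes a b :: real
  assumes "a < b" and "(a + b) / 2 > 0"
  shows "(\<lambda>n. measure (H_unif n a b)
            {u \<in> space (H_unif n a b). admits_nash_stable n u}) \<longlonglongrightarrow> 1"
proof -
  define c where "c = 2 * ((a + b) / 2)^2 / (b - a)^2"
  have c: "c > 0" using assms unfolding c_def by auto
  define f where "f n = measure (H_unif n a b) {u \<in> space (H_unif n a b). admits_nash_stable n u}" for n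
  have low: "1 - real n * exp (- c * (real n - 1)) \<le> f n" if n: "n \<ge> 2" for n
  proof -
    interpret prob_space "H_unif n a b" using H_prob[OF assms(1)] .
    let ?S = "space (H_unif n a b)"
    define B where "B x = {u \<in> ?S. coal_util u x (agents n) \<le> 0}" for x
    have Bm: "B x \<in> events" for x unfolding B_def using coal_meas[OF assms(1)] by measurable
    have Bp: "prob (B x) \<le> exp (- c * (real n - 1))" if "x < n" for x
    proof -
      have "prob (B x) \<le> exp (- 2 * (real n - 1) * ((a + b) / 2)^2 / (b - a)^2)"
        unfolding B_def row_eq using H_row[OF assms that n] .
      also have "- 2 * (real n - 1) * ((a + b) / 2)^2 / (b - a)^2 = - c * (real n - 1)"
        unfolding c_def using assms(1) by (simp add: divide_simps power2_eq_square algebra_simps)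
      finally show ?thesis .
    qed
    have sub: "?S - {u \<in> ?S. admits_nash_stable n u} \<subseteq> (\<Union>x\<in>{..<n}. B x)"
    proof
      fix u assume u: "u \<in> ?S - {u \<in> ?S. admits_nash_stable n u}"
      then have "\<not> (\<forall>x<n. 0 \<le> coal_util u x (agents n))" using good_ns[of n u] n by auto
      then obtain x where "x < n" "coal_util u x (agents n) \<le> 0" by force
      then show "u \<in> (\<Union>x\<in>{..<n}. B x)" using u unfolding B_def by auto
    qed
    have "prob (?S - {u \<in> ?S. admits_nash_stable n u}) \<le> prob (\<Union>x\<in>{..<n}. B x)"
      by (rule finite_measure_mono[OF sub]) (use Bm in auto)
    also have "\<dots> \<le> (\<Sum>x<n. prob (B x))"
      by (rule measure_UNION_le) (use Bm in auto)
    also have "\<dots> \<le> (\<Sum>x<n. exp (- c * (real n - 1)))"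
      by (rule sum_mono) (use Bp in auto)
    finally have "prob (?S - {u \<in> ?S. admits_nash_stable n u}) \<le> real n * exp (- c * (real n - 1))" by simp
    moreover have "prob (?S - {u \<in> ?S. admits_nash_stable n u}) = 1 - f n"
      unfolding f_def by (rule prob_compl) (rule admits_meas[OF assms(1)])
    ultimately show ?thesis by simp
  qed
  have up: "f n \<le> 1" for n
  proof -
    interpret prob_space "H_unif n a b" using H_prob[OF assms(1)] .
    show ?thesis unfolding f_def by simp
  qed
  have "(\<lambda>n. 1 - real n * exp (- c * (real n - 1))) \<longlonglongrightarrow> 1 - 0"
    by (intro tendsto_diff tendsto_const lim_aux c)
  then have "(\<lambda>n. 1 - real n * exp (- c * (real n - 1))) \<longlonglongrightarrow> 1" by simp
  moreover have "(\<lambda>n. 1) \<longlonglongrightarrow> (1::real)" by simp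
  ultimately have "f \<longlonglongrightarrow> 1"
  proof (rule tendsto_sandwich[rotated 2])
    show "eventually (\<lambda>n. 1 - real n * exp (- c * (real n - 1)) \<le> f n) sequentially"
      unfolding eventually_sequentially using low by blast
    show "eventually (\<lambda>n. f n \<le> 1) sequentially" using up by simp
  qed
  then show ?thesis unfolding f_def .
qed

end
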